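(* Let $k\ge1$ be an integer and $n$ a positive integer with $n>\frac{k+2}{24}$. Then $$\frac{e^{\pi\sqrt{2n/3}}}{4n\sqrt3}\cdot\frac{\widehat L_2(k)}{n^{k/2}}<\frac{\sqrt{12}\,e^{\mu(n)}}{24n-1}\cdot\frac{1}{\mu(n)^k}<\frac{e^{\pi\sqrt{2n/3}}}{4n\sqrt3}\cdot\frac{\widehat U_2(k)}{n^{k/2}},$$ where $\widehat L_2(k)=\frac{1}{\alpha^k\,24^{k/2}}\left(1-\frac{1}{4\sqrt n}\right)$ and $\widehat U_2(k)=\frac{1}{\alpha^k\,24^{k/2}}\left(1+\frac{k}{3n}\right)$.
   Context: $\alpha=\pi/6$ and $\mu(n)=\frac{\pi}{6}\sqrt{24n-1}$. *)

theory Defs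
  imports Complex_Main
begin

definition alpha :: real where "alpha = pi / 6"

definition mu :: "nat \<Rightarrow> real" where
  "mu n = (pi / 6) * sqrt (24 * real n - 1)"

definition L2hat :: "nat \<Rightarrow> nat \<Rightarrow> real" where
  "L2hat n k = 1 / (alpha ^ k * 24 powr (real k / 2)) * (1 - 1 / (4 * sqrt (real n)))"

definition U2hat :: "nat \<Rightarrow> nat \<Rightarrow> real" where
  "U2hat n k = 1 / (alpha ^ k * 24 powr (real k / 2)) * (1 + real k / (3 * real n))"

end

theory Submission
  imports Defs
begin

lemma exp_le_aux: fixes y :: real assumes "0 \<le> y" "y \<le> 1/2" shows "exp y \<le> 1 + 2*y"
proof -
  have "1 - y \<le> exp (-y)" using exp_ge_add_one_self[of "-y"] by simp
  hence "(1 - y) * exp y \<le> exp (-y) * exp y" by (intro mult_right_mono) auto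
  hence h: "(1 - y) * exp y \<le> 1" by (simp add: exp_minus field_simps)
  have "exp y \<le> 1 / (1 - y)" using h assms by (simp add: field_simps)
  also have "\<dots> \<le> 1 + 2*y"
  proof -
    have "y * (1 - 2*y) \<ge> 0" using assms by simp
    hence "1 \<le> (1 + 2*y) * (1 - y)" by (simp add: algebra_simps)
    thus ?thesis using assms by (simp add: field_simps)
  qed
  finally show ?thesis .
qed

lemma cancel_aux: fixes P X Q :: real assumes "P \<noteq> 0" shows "X * P / (P * Q) = X / Q"
  using assms by (cases "Q = 0") (simp_all add: field_simps)

theorem mainTheorem15:
  fixes k n :: nat
  assumes "k \<ge> 1" and "n > 0" and "real n > (real k + 2) / 24"
  shows "exp (pi * sqrt (2 * real n / 3)) / (4 * real n * sqrt 3) * (L2hat n k / real n powr (real k / 2))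
           < sqrt 12 * exp (mu n) / (24 * real n - 1) * (1 / mu n ^ k)
       \<and> sqrt 12 * exp (mu n) / (24 * real n - 1) * (1 / mu n ^ k)
           < exp (pi * sqrt (2 * real n / 3)) / (4 * real n * sqrt 3) * (U2hat n k / real n powr (real k / 2))"
proof -
  define a where "a = pi / 6"
  define s where "s = sqrt (24 * real n)"
  define t where "t = sqrt (24 * real n - 1)"
  have n1: "real n \<ge> 1" using assms(2) by simp
  have a0: "a > 0" unfolding a_def by simp
  have t0: "t > 0" unfolding t_def using n1 by simp
  have s0: "s > 0" unfolding s_def using n1 by simp
  have s2: "s^2 = 24 * real n" unfolding s_def by simp
  have t2: "t^2 = 24 * real n - 1" unfolding t_def using n1 by simp
  have ts: "t < s" unfolding s_def t_def by simp
  have e1: "pi * sqrt (2 * real n / 3) = a * s"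
  proof -
    have "36 * (2 * real n / 3) = 24 * real n" by simp
    hence "s = sqrt (36 * (2 * real n / 3))" unfolding s_def by metis
    also have "\<dots> = sqrt 36 * sqrt (2 * real n / 3)" by (rule real_sqrt_mult)
    also have "sqrt 36 = (6::real)" by (rule real_sqrt_unique) auto
    finally show ?thesis unfolding a_def by simp
  qed
  have e2: "mu n = a * t" unfolding mu_def a_def t_def by simp
  have pw: "\<And>x::real. x \<ge> 0 \<Longrightarrow> x powr (real k / 2) = sqrt x ^ k"
  proof -
    fix x :: real assume "x \<ge> 0"
    have "sqrt x ^ k = (x powr (1/2)) powr real k"
      using \<open>x \<ge> 0\<close> assms(1) by (cases "x = 0") (auto simp: powr_half_sqrt powr_realpow)
    also have "\<dots> = x powr (real k / 2)" by (simp add: powr_powr)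
    finally show "x powr (real k / 2) = sqrt x ^ k" by simp
  qed
  have ask: "alpha ^ k * 24 powr (real k / 2) * real n powr (real k / 2) = (a * s) ^ k"
    unfolding alpha_def a_def s_def using pw[of 24] pw[of "real n"]
    by (simp add: real_sqrt_mult power_mult_distrib power_divide)
  have c: "1 / (4 * real n * sqrt 3) = sqrt 12 / s^2"
  proof -
    have "sqrt 12 = sqrt (4 * 3)" by simp
    also have "\<dots> = 2 * sqrt 3" by (simp only: real_sqrt_mult) simp
    finally show ?thesis using s2 n1 by (simp add: field_simps)
  qed
  define B where "B = sqrt 12 * exp (a * s) / (s^2 * (a * s) ^ k)"
  define R where "R = exp (a * t - a * s) * (s / t) ^ (k + 2)"
  have B0: "B > 0" unfolding B_def using a0 s0 by simp
  have LHS: "\<And>c. exp (pi * sqrt (2 * real n / 3)) / (4 * real n * sqrt 3) *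
      (1 / (alpha ^ k * 24 powr (real k / 2)) * c / real n powr (real k / 2)) = B * c"
  proof -
    fix c
    have "exp (pi * sqrt (2 * real n / 3)) / (4 * real n * sqrt 3) *
      (1 / (alpha ^ k * 24 powr (real k / 2)) * c / real n powr (real k / 2))
      = exp (a*s) * (1 / (4 * real n * sqrt 3)) * c / (alpha ^ k * 24 powr (real k / 2) * real n powr (real k / 2))"
      using e1 by simp
    also have "\<dots> = B * c" unfolding ask c B_def by simp
    finally show "exp (pi * sqrt (2 * real n / 3)) / (4 * real n * sqrt 3) *
      (1 / (alpha ^ k * 24 powr (real k / 2)) * c / real n powr (real k / 2)) = B * c" .
  qed
  have MID: "sqrt 12 * exp (mu n) / (24 * real n - 1) * (1 / mu n ^ k) = B * R"
  proof -
    have ex: "exp (a * t) = exp (a * s) * exp (a * t - a * s)" by (simp add: exp_add[symmetric])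
    have p1: "(s / t) ^ (k + 2) = (s^k * s^2) / (t^k * t^2)" by (simp add: power_divide power_add power2_eq_square mult_ac)
    have P0: "s^k * s^2 \<noteq> 0" using s0 by simp
    have "B * R = (sqrt 12 * exp (a*t)) * (s^k * s^2) / ((s^k * s^2) * (t^2 * (a^k * t^k)))"
      unfolding B_def R_def p1 power_mult_distrib ex by (simp add: mult_ac)
    also have "\<dots> = sqrt 12 * exp (a*t) / (t^2 * (a^k * t^k))"
      using P0 by (rule cancel_aux)
    finally show ?thesis unfolding e2 t2[symmetric] power_mult_distrib by simp
  qed
  have lower: "1 - 1 / (4 * sqrt (real n)) < R"
  proof -
    have pr: "(s - t) * (s + t) = 1" using s2 t2 by (simp add: algebra_simps power2_eq_square)
    have d: "s - t = 1 / (s + t)" using pr s0 t0 by (simp add: eq_divide_eq)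
    have st1: "s - t < 1 / s" unfolding d using s0 t0 by (intro divide_strict_left_mono) auto
    have sq: "s = sqrt 24 * sqrt (real n)" unfolding s_def by (simp add: real_sqrt_mult)
    have s24: "sqrt 24 > 4" by (rule real_less_rsqrt) simp
    have sn: "sqrt (real n) > 0" using n1 by simp
    have "4 * sqrt (real n) < s" unfolding sq using s24 sn by simp
    hence st2: "1 / s < 1 / (4 * sqrt (real n))" using sn s0 by (intro divide_strict_left_mono) auto
    have a1: "a < 1" unfolding a_def using pi_less_4 by simp
    have "a * (s - t) < s - t" using a1 ts by simp
    hence A: "a * (s - t) < 1 / (4 * sqrt (real n))" using st1 st2 by linarith
    have E: "1 + (a * t - a * s) \<le> exp (a * t - a * s)" by (rule exp_ge_add_one_self)
    have "s / t \<ge> 1" using ts t0 by simp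
    hence Q: "(s / t) ^ (k + 2) \<ge> 1" by (rule one_le_power)
    have "exp (a * t - a * s) * 1 \<le> exp (a * t - a * s) * (s / t) ^ (k + 2)"
      using Q by (intro mult_left_mono) auto
    hence "exp (a * t - a * s) \<le> R" unfolding R_def by simp
    moreover have "a * t - a * s = - (a * (s - t))" by (simp add: algebra_simps)
    ultimately show ?thesis using A E by linarith
  qed
  have upper: "R < 1 + real k / (3 * real n)"
  proof -
    define N where "N = 24 * real n - 1"
    have N: "N \<ge> real k + 2" using assms(3) unfolding N_def
    proof -
      have "real k + 2 < 24 * real n" using assms(3) by simp
      hence "real (k + 2) < real (24 * n)" by simp
      hence "24 * n > k + 2" by (simp only: of_nat_less_iff)
      hence "24 * n \<ge> k + 3" by simp
      hence "real (24 * n) \<ge> real k + 3" by linarith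
      thus "24 * real n - 1 \<ge> real k + 2" by simp
    qed
    have q2: "(s/t)^2 = 1 + 1/N" unfolding N_def using s2 t2 t0 n1
      by (simp add: power_divide field_simps)
    have "(s/t) \<le> 1 + 1/(2*N)"
    proof (rule power2_le_imp_le)
      show "(s/t)^2 \<le> (1 + 1/(2*N))^2" unfolding q2 using N
        by (simp add: power2_eq_square field_simps)
    qed (use N in simp)
    hence "(s/t)^(k+2) \<le> (1 + 1/(2*N))^(k+2)" using s0 t0 by (intro power_mono) auto
    also have "\<dots> \<le> exp (1/(2*N)) ^ (k+2)" using N
      by (intro power_mono) (use exp_ge_add_one_self[of "1/(2*N)"] in \<open>auto simp: add.commute\<close>)
    also have "\<dots> = exp (real (k+2) * (1/(2*N)))" by (rule exp_of_nat_mult[symmetric])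
    also have "\<dots> = exp ((real k + 2) / (2*N))" by simp
    also have "\<dots> \<le> 1 + 2 * ((real k + 2) / (2*N))"
    proof (rule exp_le_aux)
      have N0: "N > 0" using N by simp
      show "0 \<le> (real k + 2) / (2*N)" using N0 by simp
      have "(real k + 2) / (2*N) \<le> N / (2*N)" using N N0 by (intro divide_right_mono) auto
      also have "N / (2*N) = 1/2" using N0 by simp
      finally show "(real k + 2) / (2*N) \<le> 1/2" .
    qed
    also have "\<dots> < 1 + real k / (3 * real n)"
    proof -
      have k1: "real k \<ge> 1" using assms(1) by simp
      have h1: "real n * real k \<ge> real n * 1" using k1 n1 by (intro mult_left_mono) auto
      have h2: "real n * real k \<ge> 1 * real k" using k1 n1 by (intro mult_right_mono) auto
      have e3: "3 * real n * (real k + 2) = 3 * (real n * real k) + 6 * real n"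
        by (simp add: algebra_simps)
      have e4: "real k * N = 24 * (real n * real k) - real k" unfolding N_def
        by (simp add: algebra_simps)
      have ineq: "3 * real n * (real k + 2) < real k * N" unfolding e3 e4
        using h1 h2 k1 by linarith
      have N0: "N > 0" using N by simp
      have "(real k + 2) / N < real k / (3 * real n)"
        using ineq N0 n1 by (simp add: divide_less_eq less_divide_eq mult_ac)
      moreover have "2 * ((real k + 2) / (2*N)) = (real k + 2) / N" using N0 by (simp add: field_simps)
      ultimately show ?thesis by linarith
    qed
    finally have Qb: "(s/t)^(k+2) < 1 + real k / (3 * real n)" .
    have E1: "exp (a * t - a * s) < 1" using a0 ts by simp
    have Q0: "(s/t)^(k+2) > 0" using s0 t0 by simp
    have "R < 1 * (s/t)^(k+2)" unfolding R_def using E1 Q0 by (intro mult_strict_right_mono) auto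
    thus ?thesis using Qb by simp
  qed
  have l2: "exp (pi * sqrt (2 * real n / 3)) / (4 * real n * sqrt 3) * (L2hat n k / real n powr (real k / 2))
     = B * (1 - 1 / (4 * sqrt (real n)))"
    unfolding L2hat_def by (rule LHS)
  have u2: "exp (pi * sqrt (2 * real n / 3)) / (4 * real n * sqrt 3) * (U2hat n k / real n powr (real k / 2))
     = B * (1 + real k / (3 * real n))"
    unfolding U2hat_def by (rule LHS)
  show ?thesis unfolding l2 u2 MID
    using lower upper B0 by (intro conjI mult_strict_left_mono) auto
qed

end
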